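(* Let $\mathscr X\subset\mathbb R^d$ be compact, $\|\cdot\|$ a norm, and $\mathscr X_N\subset\mathscr X$ a finite set of $N$ candidate points. Let $\mathbf x_1\in\mathscr X_N$ and, for $n\ge1$, let $\mathbf x_{n+1}$ be any point of $\mathrm{Arg}\max_{\mathbf x\in\mathscr X_N}\min_{1\le i\le n}\|\mathbf x-\mathbf x_i\|$, with $\mathbf X_n=\{\mathbf x_1,\ldots,\mathbf x_n\}$. Set $\alpha_n=1-\mathsf{CR}_{\mathscr X}(\mathscr X_N)/\mathsf{CR}_{\mathscr X}(\mathbf X_n)$. Then, for $n<N$ (with the bounds below read as trivial when $\alpha_n=0$), $$\mathsf{CR}_{\mathscr X}(\mathbf X_n)\le(2/\alpha_n)\,\mathsf{CR}_n^*\ \ (n\ge1),\qquad\mathsf{SR}(\mathbf X_n)\ge(\alpha_n/2)\,\mathsf{SR}_n^*\ \ (n\ge2),\qquad\mathsf{MR}_{\mathscr X}(\mathbf X_n)\le 2/\alpha_n\ \ (n\ge2).$$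
   Context: For a set $\mathscr Y$ and a finite point set $\mathbf Z$, $\mathsf{CR}_{\mathscr Y}(\mathbf Z)=\sup_{\mathbf y\in\mathscr Y}\min_{\mathbf z\in\mathbf Z}\|\mathbf y-\mathbf z\|$. Separation radius $\mathsf{SR}(\mathbf X_n)=\tfrac12\min_{i\ne j}\|\mathbf x_i-\mathbf x_j\|$; mesh-ratio $\mathsf{MR}_{\mathscr X}(\mathbf X_n)=\mathsf{CR}_{\mathscr X}(\mathbf X_n)/\mathsf{SR}(\mathbf X_n)$. $\mathsf{CR}_n^*$ is the minimum of $\mathsf{CR}_{\mathscr X}$ and $\mathsf{SR}_n^*$ the maximum of $\mathsf{SR}$ over all $n$-point designs of distinct points in $\mathscr X$. *)

theory Defs
  imports "HOL-Analysis.Analysis"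
begin

definition is_norm :: "('a::real_vector \<Rightarrow> real) \<Rightarrow> bool" where
  "is_norm nrm \<longleftrightarrow>
     (\<forall>x. nrm x = 0 \<longleftrightarrow> x = 0) \<and>
     (\<forall>c x. nrm (scaleR c x) = \<bar>c\<bar> * nrm x) \<and>
     (\<forall>x y. nrm (x + y) \<le> nrm x + nrm y)"

definition CR :: "('a::real_vector \<Rightarrow> real) \<Rightarrow> 'a set \<Rightarrow> 'a set \<Rightarrow> real" where
  "CR nrm Y Z = (SUP y\<in>Y. Min ((\<lambda>z. nrm (y - z)) ` Z))"

definition SR :: "('a::real_vector \<Rightarrow> real) \<Rightarrow> 'a set \<Rightarrow> real" where
  "SR nrm Z = Min {nrm (a - b) | a b. a \<in> Z \<and> b \<in> Z \<and> a \<noteq> b} / 2"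

definition MR :: "('a::real_vector \<Rightarrow> real) \<Rightarrow> 'a set \<Rightarrow> 'a set \<Rightarrow> real" where
  "MR nrm Y Z = CR nrm Y Z / SR nrm Z"

definition CRstar :: "('a::real_vector \<Rightarrow> real) \<Rightarrow> 'a set \<Rightarrow> nat \<Rightarrow> real" where
  "CRstar nrm X n = Inf {CR nrm X Z | Z. Z \<subseteq> X \<and> finite Z \<and> card Z = n}"

definition SRstar :: "('a::real_vector \<Rightarrow> real) \<Rightarrow> 'a set \<Rightarrow> nat \<Rightarrow> real" where
  "SRstar nrm X n = Sup {SR nrm Z | Z. Z \<subseteq> X \<and> finite Z \<and> card Z = n}"

end

theory Submission
  imports Defs
begin


lemma nrm_basic:
  assumes "is_norm nrm"
  shows nrm0: "nrm 0 = 0" and nrm_minus: "nrm (- v) = nrm v"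
    and nrm_sym: "nrm (a - b) = nrm (b - a)"
    and nrm_nonneg: "nrm v \<ge> 0"
    and nrm_pos: "v \<noteq> 0 \<Longrightarrow> nrm v > 0"
    and nrm_tri: "nrm (a - c) \<le> nrm (a - b) + nrm (b - c)"
proof -
  have sc: "\<And>c x. nrm (scaleR c x) = \<bar>c\<bar> * nrm x" and tr: "\<And>x y. nrm (x + y) \<le> nrm x + nrm y"
    and z: "\<And>x. nrm x = 0 \<longleftrightarrow> x = 0" using assms unfolding is_norm_def by auto
  show "nrm 0 = 0" using z by simp
  show m: "nrm (- v) = nrm v" for v using sc[of "-1" v] by simp
  show "nrm (a - b) = nrm (b - a)" using m[of "a - b"] by simp
  show nn: "nrm v \<ge> 0" for v using tr[of v "-v"] m[of v] z[of 0] by simp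
  show "v \<noteq> 0 \<Longrightarrow> nrm v > 0" using nn[of v] z[of v] by linarith
  show "nrm (a - c) \<le> nrm (a - b) + nrm (b - c)" using tr[of "a - b" "b - c"] by simp
qed

lemma nrm_sum:
  assumes "is_norm nrm" "finite S"
  shows "nrm (\<Sum>i\<in>S. f i) \<le> (\<Sum>i\<in>S. nrm (f i))"
  using assms(2)
proof (induction S rule: finite_induct)
  case empty then show ?case using nrm0[OF assms(1)] by simp
next
  case (insert a F)
  have "nrm (f a + sum f F) \<le> nrm (f a) + nrm (sum f F)"
    using assms(1) unfolding is_norm_def by blast
  then show ?case using insert by simp
qed

lemma nrm_bound:
  fixes nrm :: "'a::euclidean_space \<Rightarrow> real"
  assumes "is_norm nrm"
  shows "nrm v \<le> (\<Sum>b\<in>Basis. nrm b) * norm v"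
proof -
  have sc: "\<And>c x. nrm (scaleR c x) = \<bar>c\<bar> * nrm x" using assms unfolding is_norm_def by auto
  have "nrm v = nrm (\<Sum>b\<in>Basis. (v \<bullet> b) *\<^sub>R b)" by (simp add: euclidean_representation)
  also have "\<dots> \<le> (\<Sum>b\<in>Basis. nrm ((v \<bullet> b) *\<^sub>R b))" by (rule nrm_sum[OF assms]) simp
  also have "\<dots> = (\<Sum>b\<in>Basis. \<bar>v \<bullet> b\<bar> * nrm b)" by (simp add: sc)
  also have "\<dots> \<le> (\<Sum>b\<in>Basis. norm v * nrm b)"
    by (intro sum_mono mult_right_mono Basis_le_norm nrm_nonneg[OF assms]) 
  also have "\<dots> = (\<Sum>b\<in>Basis. nrm b) * norm v" by (simp add: sum_distrib_left mult.commute)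
  finally show ?thesis .
qed

definition dset :: "('a::real_vector \<Rightarrow> real) \<Rightarrow> 'a \<Rightarrow> 'a set \<Rightarrow> real" where
  "dset nrm y Z = Min ((\<lambda>z. nrm (y - z)) ` Z)"

lemma CR_dset: "CR nrm Y Z = (SUP y\<in>Y. dset nrm y Z)"
  unfolding CR_def dset_def by simp

lemma dset_le: "finite Z \<Longrightarrow> z \<in> Z \<Longrightarrow> dset nrm y Z \<le> nrm (y - z)"
  unfolding dset_def by simp

lemma dset_nonneg: assumes "is_norm nrm" "finite Z" "Z \<noteq> {}" shows "dset nrm y Z \<ge> 0"
  unfolding dset_def using assms nrm_nonneg[OF assms(1)] by (simp add: Min_ge_iff)

lemma dset_attain: "finite Z \<Longrightarrow> Z \<noteq> {} \<Longrightarrow> \<exists>z\<in>Z. dset nrm y Z = nrm (y - z)"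
  unfolding dset_def by (metis (no_types, lifting) Min_in finite_imageI image_iff image_is_empty)

lemma dset_mono: "finite W \<Longrightarrow> Z \<subseteq> W \<Longrightarrow> Z \<noteq> {} \<Longrightarrow> dset nrm y W \<le> dset nrm y Z"
  unfolding dset_def by (intro Min_antimono) auto

lemma dset_bdd:
  fixes nrm :: "'a::euclidean_space \<Rightarrow> real"
  assumes "is_norm nrm" "compact X" "finite Z" "Z \<noteq> {}"
  shows "bdd_above ((\<lambda>y. dset nrm y Z) ` X)"
proof -
  obtain z0 where z0: "z0 \<in> Z" using assms by auto
  obtain B where B: "\<And>y. y \<in> X \<Longrightarrow> norm y \<le> B"
    using compact_imp_bounded[OF assms(2)] bounded_iff by blast
  let ?C = "(\<Sum>b\<in>Basis. nrm b)"
  have C0: "?C \<ge> 0" by (intro sum_nonneg nrm_nonneg[OF assms(1)])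
  show ?thesis unfolding bdd_above_def
  proof (intro exI ballI)
    fix t assume "t \<in> (\<lambda>y. dset nrm y Z) ` X"
    then obtain y where y: "y \<in> X" "t = dset nrm y Z" by auto
    have "t \<le> nrm (y - z0)" using y dset_le[OF assms(3) z0] by simp
    also have "\<dots> \<le> ?C * norm (y - z0)" by (rule nrm_bound[OF assms(1)])
    also have "\<dots> \<le> ?C * (B + norm z0)"
      by (intro mult_left_mono C0) (smt (verit) B y(1) norm_triangle_ineq4)
    finally show "t \<le> ?C * (B + norm z0)" .
  qed
qed

lemma CR_ge:
  fixes nrm :: "'a::euclidean_space \<Rightarrow> real"
  assumes "is_norm nrm" "compact X" "finite Z" "Z \<noteq> {}" "y \<in> X"
  shows "dset nrm y Z \<le> CR nrm X Z"
  unfolding CR_dset by (rule cSUP_upper[OF assms(5) dset_bdd[OF assms(1-4)]])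

lemma CR_le:
  assumes "X \<noteq> {}" "\<And>y. y \<in> X \<Longrightarrow> dset nrm y Z \<le> c"
  shows "CR nrm X Z \<le> c"
  unfolding CR_dset using assms by (intro cSUP_least) auto

lemma pigeon:
  fixes nrm :: "'a::euclidean_space \<Rightarrow> real"
  assumes "is_norm nrm" "compact X" "finite B" "B \<noteq> {}" "finite A" "card B < card A" "A \<subseteq> X"
  shows "\<exists>a\<in>A. \<exists>a'\<in>A. a \<noteq> a' \<and> nrm (a - a') \<le> 2 * CR nrm X B"
proof -
  have "\<forall>a\<in>A. \<exists>z\<in>B. dset nrm a B = nrm (a - z)" using dset_attain[OF assms(3,4)] by blast
  then obtain f where f: "\<And>a. a \<in> A \<Longrightarrow> f a \<in> B \<and> dset nrm a B = nrm (a - f a)" by metis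
  have "f ` A \<subseteq> B" using f by auto
  then have "card (f ` A) \<le> card B" by (rule card_mono[OF assms(3)])
  then have "\<not> inj_on f A" using assms(6) card_image by fastforce
  then obtain a a' where aa: "a \<in> A" "a' \<in> A" "a \<noteq> a'" "f a = f a'" unfolding inj_on_def by blast
  have "nrm (a - a') \<le> nrm (a - f a) + nrm (f a - a')" by (rule nrm_tri[OF assms(1)])
  also have "nrm (f a - a') = nrm (a' - f a')" using aa(4) nrm_sym[OF assms(1)] by metis
  also have "nrm (a - f a) + nrm (a' - f a') \<le> 2 * CR nrm X B"
  proof -
    have "a \<in> X" "a' \<in> X" using aa assms(7) by auto
    then have "dset nrm a B \<le> CR nrm X B" "dset nrm a' B \<le> CR nrm X B"
      using CR_ge[OF assms(1-4)] by auto
    then show ?thesis using f[OF aa(1)] f[OF aa(2)] by linarith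
  qed
  finally show ?thesis using aa by blast
qed


lemma SR_ge:
  assumes "finite Z" "a0 \<in> Z" "b0 \<in> Z" "a0 \<noteq> b0"
    and "\<And>a b. a \<in> Z \<Longrightarrow> b \<in> Z \<Longrightarrow> a \<noteq> b \<Longrightarrow> c \<le> nrm (a - b)"
  shows "c / 2 \<le> SR nrm Z"
proof -
  let ?T = "{nrm (a - b) | a b. a \<in> Z \<and> b \<in> Z \<and> a \<noteq> b}"
  have "?T \<subseteq> (\<lambda>(a, b). nrm (a - b)) ` (Z \<times> Z)" by auto
  then have fin: "finite ?T" using assms(1) finite_subset by blast
  have ne: "?T \<noteq> {}" using assms(2-4) by blast
  have "c \<le> Min ?T" using fin ne assms(5) by (auto simp: Min_ge_iff)
  then show ?thesis unfolding SR_def by simp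
qed

lemma SR_le:
  assumes "finite Z" "a \<in> Z" "b \<in> Z" "a \<noteq> b"
  shows "SR nrm Z \<le> nrm (a - b) / 2"
proof -
  let ?T = "{nrm (a - b) | a b. a \<in> Z \<and> b \<in> Z \<and> a \<noteq> b}"
  have "?T \<subseteq> (\<lambda>(a, b). nrm (a - b)) ` (Z \<times> Z)" by auto
  then have fin: "finite ?T" using assms(1) finite_subset by blast
  have "Min ?T \<le> nrm (a - b)" using fin assms(2-4) by (intro Min_le) blast+
  then show ?thesis unfolding SR_def by simp
qed

theorem theorem6:
  fixes nrm :: "real ^ 'd \<Rightarrow> real"
    and X XN :: "(real ^ 'd) set"
    and x :: "nat \<Rightarrow> real ^ 'd"
    and n :: nat
  assumes norm: "is_norm nrm"
    and cpt: "compact X"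
    and XN_fin: "finite XN" and XN_sub: "XN \<subseteq> X"
    and x1: "x 1 \<in> XN"
    and greedy: "\<And>m. m \<ge> 1 \<Longrightarrow> x (m + 1) \<in> XN \<and>
        (\<forall>y\<in>XN. (MIN i\<in>{1..m}. nrm (y - x i)) \<le> (MIN i\<in>{1..m}. nrm (x (m + 1) - x i)))"
    and n1: "1 \<le> n" and nN: "n < card XN"
  shows "(let Xn = x ` {1..n};
              \<alpha> = 1 - CR nrm X XN / CR nrm X Xn
          in (\<alpha> > 0 \<longrightarrow> CR nrm X Xn \<le> (2 / \<alpha>) * CRstar nrm X n)
           \<and> (n \<ge> 2 \<longrightarrow> SR nrm Xn \<ge> (\<alpha> / 2) * SRstar nrm X n)
           \<and> (n \<ge> 2 \<and> \<alpha> > 0 \<longrightarrow> MR nrm X Xn \<le> 2 / \<alpha>))"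
proof -
  define D where "D = (\<lambda>m. x ` {1..m})"
  define \<delta> where "\<delta> = (\<lambda>m. (MIN i\<in>{1..m}. nrm (x (m + 1) - x i)))"
  have Min_eq: "(MIN i\<in>{1..m}. nrm (y - x i)) = dset nrm y (D m)" for y m
    unfolding dset_def D_def by (simp add: image_image)
  have xin: "m \<ge> 1 \<Longrightarrow> x m \<in> XN" for m
  proof (induction m)
    case 0 then show ?case by simp
  next
    case (Suc m)
    show ?case
    proof (cases "m = 0")
      case True then show ?thesis using x1 by simp
    next
      case False then have "m \<ge> 1" by simp
      from greedy[OF this] show ?thesis by simp
    qed
  qed
  have Xne: "X \<noteq> {}" using x1 XN_sub by auto
  have XNne: "XN \<noteq> {}" using x1 by auto
  have Dfin: "finite (D m)" for m unfolding D_def by simp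
  have Dne: "m \<ge> 1 \<Longrightarrow> D m \<noteq> {}" for m unfolding D_def by auto
  have DsubN: "D m \<subseteq> XN" for m unfolding D_def using xin by auto
  have Dsub: "D m \<subseteq> X" for m using DsubN XN_sub by blast
  have cardD: "card (D m) \<le> m" for m unfolding D_def
    using card_image_le[of "{1..m}" x] by simp
  have Dmono: "m \<le> k \<Longrightarrow> D m \<subseteq> D k" for m k unfolding D_def by auto
  have greedy': "m \<ge> 1 \<Longrightarrow> y \<in> XN \<Longrightarrow> dset nrm y (D m) \<le> \<delta> m" for m y
    using greedy[of m] unfolding \<delta>_def Min_eq by blast
  have \<delta>_eq: "\<delta> m = dset nrm (x (m + 1)) (D m)" for m unfolding \<delta>_def Min_eq ..
  have \<delta>pos: "\<delta> m > 0" if m1: "1 \<le> m" and mN: "m < card XN" for m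
  proof -
    have "\<not> XN \<subseteq> D m" using card_mono[OF Dfin[of m], of XN] cardD[of m] mN by linarith
    then obtain y where y: "y \<in> XN" "y \<notin> D m" by blast
    obtain z where z: "z \<in> D m" "dset nrm y (D m) = nrm (y - z)"
      using dset_attain[OF Dfin Dne[OF m1]] by blast
    have "y - z \<noteq> 0" using y z by auto
    then have "dset nrm y (D m) > 0" using z nrm_pos[OF norm] by simp
    then show ?thesis using greedy'[OF m1 y(1)] by linarith
  qed
  have \<delta>mono1: "\<delta> (Suc m) \<le> \<delta> m" if m1: "1 \<le> m" for m
  proof -
    have "\<delta> (Suc m) = dset nrm (x (Suc m + 1)) (D (Suc m))" by (rule \<delta>_eq)
    also have "\<dots> \<le> dset nrm (x (Suc m + 1)) (D m)"
      by (rule dset_mono[OF Dfin Dmono Dne[OF m1]]) simp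
    also have "\<dots> \<le> \<delta> m" using greedy'[OF m1 xin[of "Suc m + 1"]] by simp
    finally show ?thesis .
  qed
  have \<delta>mono: "\<delta> k \<le> \<delta> m" if "1 \<le> m" "m \<le> k" for m k
    using that(2)
  proof (induction k rule: dec_induct)
    case base then show ?case by simp
  next
    case (step k)
    then show ?case using \<delta>mono1[of k] that(1) by simp
  qed
  have pair: "\<delta> (j - 1) \<le> nrm (x j - x i)" if "1 \<le> i" "i < j" for i j
  proof -
    have jj: "j - 1 + 1 = j" using that by simp
    have "\<delta> (j - 1) = (MIN i\<in>{1..j - 1}. nrm (x j - x i))" unfolding \<delta>_def jj ..
    also have "\<dots> \<le> nrm (x j - x i)" using that by (intro Min_le) auto
    finally show ?thesis .
  qed
  have pair': "\<delta> k \<le> nrm (x j - x i)"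
    if "1 \<le> i" "1 \<le> j" "i \<noteq> j" "i \<le> k + 1" "j \<le> k + 1" "1 \<le> k" for i j k
  proof (cases "i < j")
    case True
    have "\<delta> k \<le> \<delta> (j - 1)" using True that by (intro \<delta>mono) auto
    then show ?thesis using pair[of i j] True that by linarith
  next
    case False
    then have "j < i" using that by simp
    have "\<delta> k \<le> \<delta> (i - 1)" using \<open>j < i\<close> that by (intro \<delta>mono) auto
    then show ?thesis using pair[of j i] \<open>j < i\<close> that nrm_sym[OF norm, of "x j" "x i"]
      by linarith
  qed
  have CRupper: "CR nrm X (D m) \<le> CR nrm X XN + \<delta> m" if m1: "1 \<le> m" for m
  proof (rule CR_le[OF Xne])
    fix y assume y: "y \<in> X"
    obtain z where z: "z \<in> XN" "dset nrm y XN = nrm (y - z)"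
      using dset_attain[OF XN_fin XNne] by blast
    obtain w where w: "w \<in> D m" "dset nrm z (D m) = nrm (z - w)"
      using dset_attain[OF Dfin Dne[OF m1]] by blast
    have "dset nrm y (D m) \<le> nrm (y - w)" by (rule dset_le[OF Dfin w(1)])
    also have "\<dots> \<le> nrm (y - z) + nrm (z - w)" by (rule nrm_tri[OF norm])
    also have "\<dots> \<le> CR nrm X XN + \<delta> m"
      using z w CR_ge[OF norm cpt XN_fin XNne y] greedy'[OF m1 z(1)] by linarith
    finally show "dset nrm y (D m) \<le> CR nrm X XN + \<delta> m" .
  qed
  have CRlower: "\<delta> m \<le> CR nrm X (D m)" if m1: "1 \<le> m" for m
    unfolding \<delta>_eq using CR_ge[OF norm cpt Dfin Dne[OF m1]] xin[of "m + 1"] XN_sub by auto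
  have CN0: "0 \<le> CR nrm X XN"
    using CR_ge[OF norm cpt XN_fin XNne, of "x 1"] dset_nonneg[OF norm XN_fin XNne, of "x 1"]
      x1 XN_sub by auto
  have Deq: "x ` {1..n} = D n" unfolding D_def ..
  define C where "C = CR nrm X (D n)"
  define CN where "CN = CR nrm X XN"
  define \<alpha> where "\<alpha> = 1 - CN / C"
  have \<delta>n: "\<delta> n > 0" using \<delta>pos n1 nN by simp
  have Cpos: "C > 0" using CRlower[OF n1] \<delta>n unfolding C_def by simp
  have \<alpha>C: "\<alpha> * C = C - CN" unfolding \<alpha>_def using Cpos by (simp add: field_simps)
  have \<alpha>C\<delta>: "\<alpha> * C \<le> \<delta> n" using \<alpha>C CRupper[OF n1] unfolding C_def CN_def by linarith
  have injx: "inj_on x {1..n+1}"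
  proof (rule inj_onI)
    fix i j assume ij: "i \<in> {1..n+1}" "j \<in> {1..n+1}" "x i = x j"
    show "i = j"
    proof (rule ccontr)
      assume "i \<noteq> j"
      then have "\<delta> n \<le> nrm (x j - x i)" using pair'[of i j n] ij n1 by auto
      then show False using ij(3) \<delta>n nrm0[OF norm] by simp
    qed
  qed
  have cardA: "card (x ` {1..n+1}) = n + 1" using card_image[OF injx] by simp
  have cardDn: "card (D n) = n" unfolding D_def
    using card_image[OF inj_on_subset[OF injx]] by simp
  have part1: "\<alpha> > 0 \<longrightarrow> C \<le> (2 / \<alpha>) * CRstar nrm X n"
  proof
    assume \<alpha>0: "\<alpha> > 0"
    let ?S = "{CR nrm X Z | Z. Z \<subseteq> X \<and> finite Z \<and> card Z = n}"
    have Sne: "?S \<noteq> {}" using Dsub Dfin cardDn by blast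
    have "\<delta> n / 2 \<le> CRstar nrm X n" unfolding CRstar_def
    proof (rule cInf_greatest[OF Sne])
      fix t assume "t \<in> ?S"
      then obtain Z where Z: "t = CR nrm X Z" "Z \<subseteq> X" "finite Z" "card Z = n" by blast
      have Zne: "Z \<noteq> {}" using Z n1 by auto
      have "x ` {1..n+1} \<subseteq> X" using xin XN_sub by auto
      obtain a a' where aa: "a \<in> x ` {1..n+1}" "a' \<in> x ` {1..n+1}" "a \<noteq> a'"
        "nrm (a - a') \<le> 2 * CR nrm X Z"
        using pigeon[OF norm cpt Z(3) Zne _ _ \<open>x ` {1..n+1} \<subseteq> X\<close>] cardA Z(4) by auto
      then obtain i j where "i \<in> {1..n+1}" "j \<in> {1..n+1}" "a = x j" "a' = x i" by blast
      then have "\<delta> n \<le> nrm (a - a')" using pair'[of i j n] aa(3) n1 by auto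
      then show "\<delta> n / 2 \<le> t" using aa Z by simp
    qed
    then have "\<alpha> * C \<le> 2 * CRstar nrm X n" using \<alpha>C\<delta> by linarith
    then have "C \<le> 2 * CRstar nrm X n / \<alpha>" using \<alpha>0 by (simp add: pos_le_divide_eq mult.commute)
    then show "C \<le> (2 / \<alpha>) * CRstar nrm X n" by simp
  qed
  have part2: "n \<ge> 2 \<longrightarrow> SR nrm (D n) \<ge> (\<alpha> / 2) * SRstar nrm X n"
  proof
    assume n2: "n \<ge> 2"
    have m1: "1 \<le> n - 1" using n2 by simp
    have SRge: "\<delta> (n - 1) / 2 \<le> SR nrm (D n)"
    proof (rule SR_ge[OF Dfin])
      show "x 1 \<in> D n" "x 2 \<in> D n" unfolding D_def using n2 by auto
      show "x 1 \<noteq> x 2" using injx n2 unfolding inj_on_def by fastforce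
      fix a b assume ab: "a \<in> D n" "b \<in> D n" "a \<noteq> b"
      then obtain i j where "i \<in> {1..n}" "j \<in> {1..n}" "a = x j" "b = x i" unfolding D_def by blast
      moreover then have "i \<noteq> j" using ab by auto
      ultimately show "\<delta> (n - 1) \<le> nrm (a - b)" using pair'[of i j "n - 1"] m1 by auto
    qed
    have \<delta>pos': "\<delta> (n - 1) > 0" using \<delta>pos[OF m1] nN by simp
    let ?C' = "CR nrm X (D (n - 1))"
    have CC': "C \<le> ?C'" unfolding C_def
    proof (rule CR_le[OF Xne])
      fix y assume y: "y \<in> X"
      have "dset nrm y (D n) \<le> dset nrm y (D (n - 1))"
        by (rule dset_mono[OF Dfin Dmono Dne[OF m1]]) simp
      also have "\<dots> \<le> ?C'" by (rule CR_ge[OF norm cpt Dfin Dne[OF m1] y])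
      finally show "dset nrm y (D n) \<le> ?C'" .
    qed
    have C'up: "?C' \<le> CN + \<delta> (n - 1)" using CRupper[OF m1] unfolding CN_def .
    let ?S = "{SR nrm Z | Z. Z \<subseteq> X \<and> finite Z \<and> card Z = n}"
    have Sne: "SR nrm (D n) \<in> ?S" using Dsub Dfin cardDn by blast
    have Sbd: "t \<le> ?C'" if "t \<in> ?S" for t
    proof -
      from that obtain Z where Z: "t = SR nrm Z" "Z \<subseteq> X" "finite Z" "card Z = n" by blast
      have "card (D (n - 1)) < card Z" using cardD[of "n - 1"] Z(4) n2 by simp
      then obtain a a' where aa: "a \<in> Z" "a' \<in> Z" "a \<noteq> a'" "nrm (a - a') \<le> 2 * ?C'"
        using pigeon[OF norm cpt Dfin Dne[OF m1] Z(3) _ Z(2)] by blast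
      have "SR nrm Z \<le> nrm (a - a') / 2" by (rule SR_le[OF Z(3) aa(1-3)])
      then show ?thesis using aa Z by simp
    qed
    have SRs_le: "SRstar nrm X n \<le> ?C'" unfolding SRstar_def
      using Sne Sbd by (intro cSup_least) auto
    have SRs_ge: "SR nrm (D n) \<le> SRstar nrm X n" unfolding SRstar_def
      using Sne Sbd by (intro cSup_upper) (auto simp: bdd_above_def)
    show "SR nrm (D n) \<ge> (\<alpha> / 2) * SRstar nrm X n"
    proof (cases "\<alpha> \<ge> 0")
      case False
      have "(\<alpha> / 2) * SRstar nrm X n \<le> 0"
        using False SRs_ge SRge \<delta>pos' by (intro mult_nonpos_nonneg) auto
      then show ?thesis using SRge \<delta>pos' by linarith
    next
      case True
      have "(\<alpha> / 2) * SRstar nrm X n \<le> (\<alpha> / 2) * ?C'"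
        using True SRs_le by (intro mult_left_mono) auto
      moreover have "CN * C \<le> CN * ?C'" using CN0 CC' unfolding CN_def by (intro mult_left_mono) auto
      then have "CN \<le> CN * ?C' / C" using Cpos by (simp add: pos_le_divide_eq)
      moreover have "\<alpha> * ?C' = ?C' - CN * ?C' / C" unfolding \<alpha>_def using Cpos
        by (simp add: field_simps)
      moreover have "(\<alpha> / 2) * ?C' = (\<alpha> * ?C') / 2" by simp
      ultimately show ?thesis using C'up SRge by linarith
    qed
  qed
  have part3: "n \<ge> 2 \<and> \<alpha> > 0 \<longrightarrow> MR nrm X (D n) \<le> 2 / \<alpha>"
  proof
    assume h: "n \<ge> 2 \<and> \<alpha> > 0"
    have SRge: "\<delta> n / 2 \<le> SR nrm (D n)"
    proof (rule SR_ge[OF Dfin])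
      show "x 1 \<in> D n" "x 2 \<in> D n" unfolding D_def using h by auto
      show "x 1 \<noteq> x 2" using injx h unfolding inj_on_def by fastforce
      fix a b assume ab: "a \<in> D n" "b \<in> D n" "a \<noteq> b"
      then obtain i j where "i \<in> {1..n}" "j \<in> {1..n}" "a = x j" "b = x i" unfolding D_def by blast
      then show "\<delta> n \<le> nrm (a - b)" using pair'[of i j n] ab n1 by auto
    qed
    have p: "\<alpha> * C / 2 > 0" using h Cpos by simp
    have "MR nrm X (D n) = C / SR nrm (D n)" unfolding MR_def C_def ..
    also have "\<dots> \<le> C / (\<alpha> * C / 2)"
      using SRge \<alpha>C\<delta> p Cpos by (intro divide_left_mono) auto
    also have "\<dots> = 2 / \<alpha>" using Cpos by simp
    finally show "MR nrm X (D n) \<le> 2 / \<alpha>" .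
  qed
  show ?thesis unfolding Let_def Deq using part1 part2 part3
    unfolding \<alpha>_def C_def CN_def by blast
qed

end
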